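(* Let $\alpha>-1$, let $\hat L^\alpha_n$ be the monic Laguerre polynomials, and let $(\rho_n)_{n\ge0}$ be positive real numbers such that for some $\nu>0$ $$\frac{\rho_{n-1}}{\rho_n}\le\nu,\quad n\ge1.$$ Let $K$ be a positive integer and $\gamma_0,\dots,\gamma_K$ real numbers with $\gamma_0=1$, $\gamma_K\neq0$. Then the polynomial $$q_n(x)=\sum_{j=0}^K\gamma_j\rho_{n-j}\hat L^\alpha_{n-j}(x)$$ has only real and simple zeros for $$n\ge\max\left\{\frac18\left(23\nu\,2^{K-1}\frac{(23\nu)^{K-1}-1}{23\nu-1}\Gamma_2-2|\alpha|\right),\ \frac{\nu-\alpha+1}{2},\ \alpha+9,\ 2K\right\},$$ where $\Gamma_2=\max\{|\gamma_j|:2\le j\le K\}$, and these zeros interlace the zeros of $L^\alpha_{n-1}$. Moreover, for $n$ sufficiently large all the zeros of $q_n$ are positive.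
   Context: $L^\alpha_n$ is the Laguerre polynomial of degree $n$, orthogonal with respect to $x^\alpha e^{-x}dx$ on $(0,\infty)$, and $\hat L^\alpha_n=(-1)^nn!L^\alpha_n$ is its monic version; they satisfy $x\hat L^\alpha_n=\hat L^\alpha_{n+1}+(2n+\alpha+1)\hat L^\alpha_n+n(n+\alpha)\hat L^\alpha_{n-1}$. When $23\nu=1$ the quotient $\frac{(23\nu)^{K-1}-1}{23\nu-1}$ is read as $\sum_{j=0}^{K-2}(23\nu)^j$. Interlacing: given two finite sets $U,V$ of reals, $U$ interlaces $V$ if $\min U<\min V$ and between any two consecutive elements of either set there is an element of the other; here $U$ is the zero set of $q_n$ and $V$ that of $L^\alpha_{n-1}$. *)

theory Defs
  imports "HOL-Computational_Algebra.Polynomial" Complex_Main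
begin

definition laguerre :: "real \<Rightarrow> nat \<Rightarrow> real poly" where
  "laguerre \<alpha> n = (\<Sum>k\<le>n. monom (((of_nat n + \<alpha>) gchoose (n - k)) * (-1) ^ k / fact k) k)"

definition monic_laguerre :: "real \<Rightarrow> nat \<Rightarrow> real poly" where
  "monic_laguerre \<alpha> n = smult ((-1) ^ n * fact n) (laguerre \<alpha> n)"

definition interlaces :: "real set \<Rightarrow> real set \<Rightarrow> bool" where
  "interlaces U V \<longleftrightarrow> finite U \<and> finite V \<and> U \<noteq> {} \<and> V \<noteq> {} \<and> Min U < Min V \<and>
     (\<forall>a\<in>U. \<forall>b\<in>U. a < b \<and> \<not>(\<exists>c\<in>U. a < c \<and> c < b) \<longrightarrow> (\<exists>v\<in>V. a < v \<and> v < b)) \<and>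
     (\<forall>a\<in>V. \<forall>b\<in>V. a < b \<and> \<not>(\<exists>c\<in>V. a < c \<and> c < b) \<longrightarrow> (\<exists>u\<in>U. a < u \<and> u < b))"

text \<open>The quotient ((23 nu)^(K-1) - 1)/(23 nu - 1), read as a geometric sum when 23 nu = 1.\<close>
definition geom_quot :: "real \<Rightarrow> nat \<Rightarrow> real" where
  "geom_quot t K = (if t = 1 then (\<Sum>j<K - 1. t ^ j) else (t ^ (K - 1) - 1) / (t - 1))"

end

theory Submission
  imports Defs
begin


definition cf :: "real \<Rightarrow> nat \<Rightarrow> nat \<Rightarrow> real" where
  "cf \<alpha> n k = (if k \<le> n then (-1)^(n+k) * (fact n / (fact k * fact (n-k))) * pochhammer (of_nat k + \<alpha> + 1) (n-k) else 0)"

lemma coeff_ml: "coeff (monic_laguerre \<alpha> n) k = cf \<alpha> n k"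
proof -
  have "coeff (laguerre \<alpha> n) k = (if k \<le> n then ((of_nat n + \<alpha>) gchoose (n - k)) * (-1) ^ k / fact k else 0)"
    unfolding laguerre_def coeff_sum coeff_monom
    by (auto simp: sum.delta)
  then show ?thesis
    unfolding monic_laguerre_def cf_def gbinomial_pochhammer'
    by (auto simp: of_nat_diff power_add field_simps)
qed



lemma cf_eval: "k \<le> n \<Longrightarrow> cf \<alpha> n k = (-1)^(n+k) * (fact n / (fact k * fact (n-k))) * pochhammer (of_nat k + \<alpha> + 1) (n-k)"
  by (simp add: cf_def)

lemma alg_id:
  fixes k d a s F fk fd Q k1 d1 d2 :: real
  assumes "k1 = k+1" "d1 = d+1" "d2 = d+2" "k1 \<noteq> 0" "d1 \<noteq> 0" "d2 \<noteq> 0" "fk \<noteq> 0" "fd \<noteq> 0"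
  shows "s * ((k+d+3)*(k+d+2)*(k+d+1)*F / (k1*fk*(d2*d1*fd))) * ((k+a+2+d+1)*(k+a+2+d)*Q)
   = s * ((k+d+2)*(k+d+1)*F / (fk * (d2*d1*fd))) * ((k+a+1)*(k+a+2+d)*Q)
     - (2*(k+d+2)+a+1) * (-s * ((k+d+2)*(k+d+1)*F / (k1*fk*(d1*fd))) * ((k+a+2+d)*Q))
     - (k+d+2)*((k+d+2)+a) * (s * ((k+d+1)*F/(k1*fk*fd)) * Q)"
proof -
  have e: "(k+d+3)*(k+d+2)*(k+d+1)*(k+a+2+d+1)*(k+a+2+d) = k1*((k+d+2)*(k+d+1)*(k+a+1)*(k+a+2+d)) + (2*(k+d+2)+a+1)*d2*((k+d+2)*(k+d+1)*(k+a+2+d)) - (k+d+2)*((k+d+2)+a)*(d2*d1*(k+d+1))"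
    unfolding assms(1-3) by algebra
  define W where "W = s*F*Q/(fk*fd)"
  have 1: "s * ((k+d+3)*(k+d+2)*(k+d+1)*F / (k1*fk*(d2*d1*fd))) * ((k+a+2+d+1)*(k+a+2+d)*Q) = W * ((k+d+3)*(k+d+2)*(k+d+1)*(k+a+2+d+1)*(k+a+2+d)) / (k1*d2*d1)"
    unfolding W_def by (simp add: field_simps)
  have 2: "s * ((k+d+2)*(k+d+1)*F / (fk * (d2*d1*fd))) * ((k+a+1)*(k+a+2+d)*Q) = W * (k1*((k+d+2)*(k+d+1)*(k+a+1)*(k+a+2+d))) / (k1*d2*d1)"
    unfolding W_def using assms(4-) by (simp add: field_simps)
  have 3: "(2*(k+d+2)+a+1) * (-s * ((k+d+2)*(k+d+1)*F / (k1*fk*(d1*fd))) * ((k+a+2+d)*Q)) = - W * ((2*(k+d+2)+a+1)*d2*((k+d+2)*(k+d+1)*(k+a+2+d))) / (k1*d2*d1)"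
    unfolding W_def using assms(4-) by (simp add: field_simps)
  have 4: "(k+d+2)*((k+d+2)+a) * (s * ((k+d+1)*F/(k1*fk*fd)) * Q) = W * ((k+d+2)*((k+d+2)+a)*(d2*d1*(k+d+1))) / (k1*d2*d1)"
    unfolding W_def using assms(4-) by (simp add: field_simps)
  show ?thesis unfolding 1 2 3 4 e by (simp add: diff_divide_distrib add_divide_distrib algebra_simps)
qed

lemma cf_gen:
  fixes \<alpha> :: real and k d :: nat
  shows "cf \<alpha> (Suc (Suc k + d) + 1) (Suc k) = cf \<alpha> (Suc (Suc k + d)) k
     - (2 * real (Suc (Suc k + d)) + \<alpha> + 1) * cf \<alpha> (Suc (Suc k + d)) (Suc k)
     - real (Suc (Suc k + d)) * (real (Suc (Suc k + d)) + \<alpha>) * cf \<alpha> (Suc k + d) (Suc k)"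
proof -
  define Q where "Q = pochhammer (real k + \<alpha> + 2) d"
  define F where "F = (fact (k+d) :: real)"
  define s where "s = ((-1)^d :: real)"
  have sg: "(-1::real)^(2*k+d+c) = s * (-1)^c" for c
    by (simp add: s_def power_add power_mult)
  have pq: "pochhammer (x::real) (Suc (Suc d)) = (x + real d + 1) * (x + real d) * pochhammer x d" for x
    by (simp add: pochhammer_rec' algebra_simps)
  have pq1: "pochhammer (x::real) (Suc d) = (x + real d) * pochhammer x d" for x
    by (simp add: pochhammer_rec' algebra_simps)
  have A: "cf \<alpha> (Suc (Suc k + d) + 1) (Suc k) = s * ((real k+real d+3)*(real k+real d+2)*(real k+real d+1)*F / ((real k+1)*fact k*((real d+2)*(real d+1)*fact d))) * ((real k+\<alpha>+2+real d+1)*(real k+\<alpha>+2+real d)*Q)"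
  proof -
    have "cf \<alpha> (Suc (Suc k + d) + 1) (Suc k) = (-1)^(2*k+d+4) * (fact (Suc (Suc (Suc (k+d)))) / (fact (Suc k) * fact (Suc (Suc d)))) * pochhammer (real k + \<alpha> + 2) (Suc (Suc d))"
      by (subst cf_eval) (auto simp: algebra_simps numeral_eq_Suc)
    then show ?thesis unfolding sg pq Q_def F_def fact_Suc by (simp add: algebra_simps)
  qed
  have B: "cf \<alpha> (Suc (Suc k + d)) k = s * ((real k+real d+2)*(real k+real d+1)*F / (fact k * ((real d+2)*(real d+1)*fact d))) * ((real k+\<alpha>+1)*(real k+\<alpha>+2+real d)*Q)"
  proof -
    have "cf \<alpha> (Suc (Suc k + d)) k = (-1)^(2*k+d+2) * (fact (Suc (Suc (k+d))) / (fact k * fact (Suc (Suc d)))) * ((real k + \<alpha> + 1) * pochhammer (real k + \<alpha> + 2) (Suc d))"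
      by (subst cf_eval) (auto simp: algebra_simps numeral_eq_Suc pochhammer_rec)
    then show ?thesis unfolding sg pq1 Q_def F_def fact_Suc by (simp add: algebra_simps)
  qed
  have C: "cf \<alpha> (Suc (Suc k + d)) (Suc k) = -s * ((real k+real d+2)*(real k+real d+1)*F / ((real k+1)*fact k*((real d+1)*fact d))) * ((real k+\<alpha>+2+real d)*Q)"
  proof -
    have "cf \<alpha> (Suc (Suc k + d)) (Suc k) = (-1)^(2*k+d+3) * (fact (Suc (Suc (k+d))) / (fact (Suc k) * fact (Suc d))) * pochhammer (real k + \<alpha> + 2) (Suc d)"
      by (subst cf_eval) (auto simp: algebra_simps numeral_eq_Suc)
    then show ?thesis unfolding sg pq1 Q_def F_def fact_Suc by (simp add: algebra_simps)
  qed
  have D: "cf \<alpha> (Suc k + d) (Suc k) = s * ((real k+real d+1)*F/((real k+1)*fact k*fact d)) * Q"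
  proof -
    have "cf \<alpha> (Suc k + d) (Suc k) = (-1)^(2*k+d+2) * (fact (Suc (k+d)) / (fact (Suc k) * fact d)) * pochhammer (real k + \<alpha> + 2) d"
      by (subst cf_eval) (auto simp: algebra_simps numeral_eq_Suc)
    then show ?thesis unfolding sg Q_def F_def fact_Suc by (simp add: algebra_simps)
  qed
  have eqN: "real (Suc (Suc k + d)) = real k + real d + 2" by simp
  show ?thesis unfolding A B C D eqN
    by (rule alg_id[of "real k + 1" "real k" "real d + 1" "real d" "real d + 2" "fact k" "fact d"]) auto
qed



lemma coeff_lin_mult: "coeff ([:a, 1:] * p) i = a * coeff p i + (if i = 0 then 0 else coeff p (i - 1))" for a :: real
  by (cases i) (auto simp: coeff_pCons)

lemma cf_top: "cf \<alpha> n n = 1"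
  by (simp add: cf_def)

lemma cf_hi: "n < k \<Longrightarrow> cf \<alpha> n k = 0"
  by (simp add: cf_def)

lemma fact_ratio1: "(fact (Suc m) :: real) / (fact m * fact (Suc m - m)) = real m + 1"
  by (simp add: fact_Suc)

lemma cf_sub1: "cf \<alpha> (Suc m) m = - (real m + 1) * (real m + \<alpha> + 1)"
proof -
  have "cf \<alpha> (Suc m) m = (-1)^(Suc (2*m)) * (fact (Suc m) / (fact m * fact (Suc m - m))) * pochhammer (real m + \<alpha> + 1) (Suc m - m)"
    by (simp add: cf_def mult_2)
  also have "\<dots> = - (real m + 1) * (real m + \<alpha> + 1)"
    unfolding fact_ratio1 by simp
  finally show ?thesis .
qed

lemma cf_rec:
  "cf \<alpha> (Suc (Suc n)) i = -(2*real (Suc n)+\<alpha>+1) * cf \<alpha> (Suc n) i + (if i = 0 then 0 else cf \<alpha> (Suc n) (i - 1))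
      - real (Suc n) * (real (Suc n) + \<alpha>) * cf \<alpha> n i"
proof -
  consider "i > Suc (Suc n)" | "i = Suc (Suc n)" | "i = Suc n" | "i = 0" | k d where "i = Suc k" "n = Suc k + d"
    by (metis add_Suc less_Suc_eq less_imp_Suc_add nat.exhaust not_less_eq)
  then show ?thesis
  proof cases
    case 1 then show ?thesis by (simp add: cf_hi)
  next
    case 2 then show ?thesis by (simp add: cf_hi cf_top)
  next
    case 3
    have a: "cf \<alpha> (Suc (Suc n)) (Suc n) = - (real n + 2) * (real n + \<alpha> + 2)"
      using cf_sub1[of \<alpha> "Suc n"] by (simp add: algebra_simps)
    have b: "cf \<alpha> (Suc n) n = - (real n + 1) * (real n + \<alpha> + 1)"
      by (rule cf_sub1)
    have c: "cf \<alpha> n (Suc n) = 0" by (simp add: cf_hi)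
    show ?thesis unfolding 3 by (simp only: a b c cf_top nat.simps if_False diff_Suc_1) (simp add: algebra_simps)
  next
    case 4
    have a: "cf \<alpha> m 0 = (-1)^m * pochhammer (\<alpha> + 1) m" for m
      by (simp add: cf_def)
    have p1: "pochhammer (\<alpha> + 1) (Suc n) = (\<alpha> + 1 + real n) * pochhammer (\<alpha> + 1) n"
      by (simp add: pochhammer_rec')
    have p2: "pochhammer (\<alpha> + 1) (Suc (Suc n)) = (\<alpha> + 1 + real n + 1) * ((\<alpha> + 1 + real n) * pochhammer (\<alpha> + 1) n)"
      by (simp add: pochhammer_rec' algebra_simps)
    show ?thesis unfolding 4 a p1 p2 by (simp add: algebra_simps)
  next
    case 5
    show ?thesis using cf_gen[of \<alpha> k d] 5 by (simp add: algebra_simps)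
  qed
qed

lemma ml_rec: "monic_laguerre \<alpha> (Suc (Suc n)) =
   [:-(2*real (Suc n)+\<alpha>+1), 1:] * monic_laguerre \<alpha> (Suc n) - smult (real (Suc n) * (real (Suc n) + \<alpha>)) (monic_laguerre \<alpha> n)"
  apply (rule poly_eqI)
  apply (subst coeff_diff)
  apply (subst coeff_lin_mult)
  apply (simp only: coeff_smult coeff_ml cf_rec)
  done

lemma ml_0: "monic_laguerre \<alpha> 0 = 1"
  by (rule poly_eqI) (simp add: coeff_ml cf_def coeff_1)

lemma ml_1: "monic_laguerre \<alpha> 1 = [:-(\<alpha>+1), 1:]"
  by (rule poly_eqI) (auto simp: coeff_ml cf_def coeff_pCons split: nat.split)



definition pr :: "real list \<Rightarrow> real poly" where
  "pr ys = prod_list (map (\<lambda>y. [:-y, 1:]) ys)"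

lemma pr_Nil[simp]: "pr [] = 1" and pr_Cons: "pr (y # ys) = [:-y, 1:] * pr ys"
  by (simp_all add: pr_def)

lemma poly_pr: "poly (pr ys) x = prod_list (map (\<lambda>y. x - y) ys)"
  by (induction ys) (auto simp: algebra_simps pr_Cons)

lemma poly_pr_Cons: "poly (pr (y # ys)) x = (x - y) * poly (pr ys) x"
  by (simp add: algebra_simps pr_Cons)

lemma pr_monic: "degree (pr ys) = length ys \<and> lead_coeff (pr ys) = 1"
proof (induction ys)
  case Nil then show ?case by simp
next
  case (Cons y ys)
  have ne: "pr ys \<noteq> 0" using Cons by auto
  have "degree (pr (y # ys)) = degree [:-y, 1:] + degree (pr ys)"
    unfolding pr_Cons by (rule degree_mult_eq) (use ne in auto)
  moreover have "lead_coeff (pr (y # ys)) = lead_coeff [:-y, 1:] * lead_coeff (pr ys)"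
    unfolding pr_Cons by (rule lead_coeff_mult)
  moreover have IH1: "degree (pr ys) = length ys" and IH2: "coeff (pr ys) (length ys) = 1"
    using Cons.IH by auto
  ultimately show ?case by simp
qed

lemma pr_nonzero: "pr ys \<noteq> 0"
  using pr_monic[of ys] by auto

lemma sgn_pr_count:
  assumes "sorted_wrt (<) ys" "k \<le> length ys"
    "k = 0 \<or> ys ! (k - 1) < x" "k = length ys \<or> x < ys ! k"
  shows "sgn (poly (pr ys) x) = (-1) ^ (length ys - k)"
  using assms
proof (induction ys arbitrary: k)
  case Nil then show ?case by simp
next
  case (Cons y ys)
  show ?case
  proof (cases k)
    case 0
    then have xy: "x < y" using Cons.prems by auto
    have "sgn (poly (pr ys) x) = (-1) ^ (length ys - 0)"
    proof (rule Cons.IH)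
      show "sorted_wrt (<) ys" using Cons.prems by simp
      show "0 = length ys \<or> x < ys ! 0"
        using Cons.prems(1) xy by (cases ys) auto
    qed auto
    then show ?thesis using 0 xy unfolding poly_pr_Cons sgn_mult by simp
  next
    case (Suc k')
    then have yx: "y < x"
    proof -
      have "y \<le> (y # ys) ! (k - 1)"
      proof (cases k')
        case 0 then show ?thesis using Suc by simp
      next
        case (Suc j)
        then have "j < length ys" using Cons.prems(2) \<open>k = Suc k'\<close> by simp
        then have "ys ! j \<in> set ys" by (rule nth_mem)
        then have "y < ys ! j" using Cons.prems(1) by simp
        then show ?thesis using Suc \<open>k = Suc k'\<close> by simp
      qed
      then show ?thesis using Cons.prems(3) Suc by auto
    qed
    have c1: "k' = 0 \<or> ys ! (k' - 1) < x"
    proof (cases k')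
      case (Suc j)
      then show ?thesis using Cons.prems(3) \<open>k = Suc k'\<close> by simp
    qed simp
    have c2: "k' = length ys \<or> x < ys ! k'" using Cons.prems(4) Suc by auto
    have "sgn (poly (pr ys) x) = (-1) ^ (length ys - k')"
      by (rule Cons.IH) (use Cons.prems Suc c1 c2 in auto)
    then show ?thesis using Suc yx unfolding poly_pr_Cons sgn_mult by simp
  qed
qed



lemma roots_factor:
  fixes p :: "real poly"
  assumes "distinct xs" "\<forall>x\<in>set xs. poly p x = 0"
  shows "\<exists>q. p = pr xs * q"
  using assms
proof (induction xs arbitrary: p)
  case Nil then show ?case by (auto simp: pr_def)
next
  case (Cons x xs)
  have "[:-x, 1:] dvd p" using Cons.prems by (simp add: poly_eq_0_iff_dvd)
  then obtain p1 where p1: "p = [:-x, 1:] * p1" by (elim dvdE)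
  have "\<forall>z\<in>set xs. poly p1 z = 0"
  proof
    fix z assume z: "z \<in> set xs"
    then have "z \<noteq> x" using Cons.prems(1) by auto
    moreover have "poly p z = 0" using Cons.prems(2) z by auto
    ultimately show "poly p1 z = 0" using p1 by simp
  qed
  then obtain q where "p1 = pr xs * q" using Cons.IH Cons.prems(1) by auto
  then have "p = pr (x # xs) * q" using p1 by (simp only: pr_Cons mult.assoc)
  then show ?case by blast
qed

lemma roots_full:
  fixes p :: "real poly"
  assumes "distinct xs" "\<forall>x\<in>set xs. poly p x = 0" "degree p = length xs" "p \<noteq> 0"
  shows "p = smult (lead_coeff p) (pr xs)"
proof -
  obtain q where q: "p = pr xs * q" using roots_factor assms(1,2) by blast
  have qne: "q \<noteq> 0" using q assms(4) by auto
  have "degree p = degree (pr xs) + degree q"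
    unfolding q by (rule degree_mult_eq) (use qne pr_nonzero in auto)
  then have "degree q = 0" using assms(3) pr_monic[of xs] by simp
  then obtain c where c: "q = [:c:]" by (metis degree_eq_zeroE)
  have eq: "lead_coeff p = lead_coeff (pr xs) * lead_coeff q" unfolding q by (rule lead_coeff_mult)
  have l1: "lead_coeff (pr xs) = 1" using pr_monic[of xs] by blast
  have lq: "lead_coeff q = c" using c by simp
  have "lead_coeff p = c" using eq by (simp only: l1 lq mult_1)
  have "p = smult c (pr xs)" using q c by simp
  then show ?thesis by (subst \<open>lead_coeff p = c\<close>)
qed

lemma pinfty_pos:
  fixes p :: "real poly"
  assumes "lead_coeff p > 0"
  shows "\<exists>M. \<forall>x\<ge>M. poly p x > 0"
  using poly_pinfty_gt_lc[OF assms] assms by (meson less_le_trans)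

lemma minfty_sgn:
  fixes p :: "real poly"
  assumes "lead_coeff p > 0"
  shows "\<exists>M. \<forall>x\<le>M. sgn (poly p x) = (-1) ^ degree p"
proof -
  define r where "r = smult ((-1) ^ degree p) (p \<circ>\<^sub>p [:0, -1:])"
  have dr: "degree (p \<circ>\<^sub>p [:0, -1:]) = degree p" by (simp add: degree_pcompose)
  have "lead_coeff (p \<circ>\<^sub>p [:0, -1:]) = lead_coeff p * (-1) ^ degree p"
    by (subst lead_coeff_comp) auto
  then have "lead_coeff r = lead_coeff p"
    unfolding r_def by (simp add: dr flip: power_mult_distrib)
  then obtain M where M: "\<forall>x\<ge>M. poly r x > 0" using pinfty_pos assms by metis
  have "sgn (poly p x) = (-1) ^ degree p" if "x \<le> -M" for x
  proof -
    have "poly r (-x) > 0" using M that by auto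
    then have "(-1) ^ degree p * poly p x > 0" unfolding r_def by (simp add: poly_pcompose)
    then show ?thesis
      by (cases "even (degree p)") (auto simp: sgn_if zero_less_mult_iff)
  qed
  then show ?thesis by blast
qed



lemma abs_le_sum_list: "y \<in> set ys \<Longrightarrow> \<bar>y\<bar> \<le> sum_list (map abs ys)" for y :: real
proof (induction ys)
  case (Cons a ys)
  have "0 \<le> sum_list (map abs ys)" by (induction ys) auto
  then show ?case using Cons by auto
qed simp

lemma sgn_m1: "sgn (x::real) = -1 \<Longrightarrow> x < 0"
  by (auto simp: sgn_if split: if_splits)

lemma step:
  fixes p :: "real poly" and ys :: "real list"
  assumes srt: "sorted_wrt (<) ys" and deg: "degree p = Suc (length ys)" and lc: "lead_coeff p > 0"
    and sg: "\<forall>k<length ys. sgn (poly p (ys!k)) = (-1)^(length ys - k)"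
  shows "\<exists>xs. length xs = Suc (length ys) \<and> sorted_wrt (<) xs \<and> p = smult (lead_coeff p) (pr xs) \<and>
           (\<forall>k<length ys. xs!k < ys!k \<and> ys!k < xs!(Suc k))"
proof -
  define m where "m = length ys"
  obtain M1 where M1: "\<forall>x\<ge>M1. poly p x > 0" using pinfty_pos[OF lc] by blast
  obtain M2 where M2: "\<forall>x\<le>M2. sgn (poly p x) = (-1) ^ Suc m" using minfty_sgn[OF lc] deg m_def by metis
  define S where "S = sum_list (map abs ys)"
  have S0: "S \<ge> 0" unfolding S_def by (induction ys) auto
  have Sb: "\<bar>ys!k\<bar> \<le> S" if "k < m" for k
    unfolding S_def by (rule abs_le_sum_list) (use that m_def in simp)
  define L where "L = min M2 (-S - 1)"
  define U where "U = max M1 (S + 1)"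
  define lo where "lo k = (if k = 0 then L else ys!(k-1))" for k
  define hi where "hi k = (if k = m then U else ys!k)" for k
  have sgU: "sgn (poly p U) = 1" using M1 unfolding U_def by auto
  have sgL: "sgn (poly p L) = (-1) ^ Suc m" using M2 unfolding L_def by auto
  have key: "lo k < hi k \<and> poly p (lo k) * poly p (hi k) < 0" if "k \<le> m" for k
  proof
    show "lo k < hi k"
    proof (cases "k = 0")
      case True
      show ?thesis
      proof (cases "m = 0")
        case True then show ?thesis using \<open>k = 0\<close> S0 unfolding lo_def hi_def L_def U_def by auto
      next
        case False
        then have "\<bar>ys!0\<bar> \<le> S" using Sb by auto
        then show ?thesis using \<open>k = 0\<close> False unfolding lo_def hi_def L_def by auto
      qed
    next
      case False
      show ?thesis
      proof (cases "k = m")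
        case True
        then have "\<bar>ys!(k-1)\<bar> \<le> S" using Sb False by auto
        then show ?thesis using True False unfolding lo_def hi_def U_def by auto
      next
        case False2: False
        then have "ys!(k-1) < ys!k" using sorted_wrt_nth_less[OF srt, of "k-1" k] False that m_def by auto
        then show ?thesis using False False2 unfolding lo_def hi_def by auto
      qed
    qed
  next
    have h: "sgn (poly p (hi k)) = (-1)^(m-k)"
      using sgU sg that m_def unfolding hi_def by auto
    have l: "sgn (poly p (lo k)) = - ((-1)^(m-k))"
    proof (cases "k = 0")
      case True then show ?thesis using sgL unfolding lo_def by simp
    next
      case False
      then have "sgn (poly p (ys!(k-1))) = (-1)^(m-(k-1))" using sg that m_def by auto
      moreover have "m - (k-1) = Suc (m - k)" using False that by auto
      ultimately show ?thesis using False unfolding lo_def by simp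
    qed
    have "sgn (poly p (lo k) * poly p (hi k)) = -1"
      unfolding sgn_mult h l by (simp flip: power_add)
    then show "poly p (lo k) * poly p (hi k) < 0"
      by (rule sgn_m1)
  qed
  define root where "root k = (SOME x. lo k < x \<and> x < hi k \<and> poly p x = 0)" for k
  have root: "lo k < root k \<and> root k < hi k \<and> poly p (root k) = 0" if "k \<le> m" for k
  proof -
    have "\<exists>x. lo k < x \<and> x < hi k \<and> poly p x = 0"
      using poly_IVT[of "lo k" "hi k" p] key[OF that] by auto
    then show ?thesis unfolding root_def by (rule someI_ex)
  qed
  define xs where "xs = map root [0..<Suc m]"
  have lxs: "length xs = Suc m" unfolding xs_def by simp
  have xsk: "xs ! k = root k" if "k \<le> m" for k
    unfolding xs_def using that by (simp del: upt_Suc)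
  have srtx: "sorted_wrt (<) xs"
    unfolding sorted_wrt_iff_nth_less
  proof (intro allI impI)
    fix i j assume ij: "i < j" "j < length xs"
    then have "j \<le> m" "i < m" using lxs by auto
    have "root i < hi i" using root[of i] \<open>i < m\<close> by auto
    also have "hi i = ys ! i" unfolding hi_def using \<open>i < m\<close> by auto
    also have "ys ! i \<le> ys ! (j - 1)"
    proof (cases "i = j - 1")
      case False
      have "i < j - 1" "j - 1 < length ys" using False ij \<open>j \<le> m\<close> m_def by auto
      from sorted_wrt_nth_less[OF srt this] show ?thesis by simp
    qed simp
    also have "ys ! (j-1) = lo j" unfolding lo_def using ij by auto
    also have "lo j < root j" using root[OF \<open>j \<le> m\<close>] by auto
    finally show "xs ! i < xs ! j" using xsk \<open>j \<le> m\<close> \<open>i < m\<close> by auto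
  qed
  have dist: "distinct xs" using srtx strict_sorted_iff by blast
  have rts: "\<forall>x\<in>set xs. poly p x = 0"
    unfolding xs_def using root by auto
  have pne: "p \<noteq> 0" using lc by auto
  have pe: "p = smult (lead_coeff p) (pr xs)"
    by (rule roots_full[OF dist rts]) (use deg lxs m_def pne in auto)
  have il: "xs!k < ys!k \<and> ys!k < xs!(Suc k)" if "k < m" for k
  proof
    show "xs!k < ys!k" using root[of k] that xsk[of k] unfolding hi_def by auto
    show "ys!k < xs!(Suc k)" using root[of "Suc k"] that xsk[of "Suc k"] unfolding lo_def by auto
  qed
  show ?thesis using lxs srtx pe il m_def by blast
qed



lemma ml_deg: "degree (monic_laguerre \<alpha> m) = m \<and> lead_coeff (monic_laguerre \<alpha> m) = 1"
proof -
  have c1: "coeff (monic_laguerre \<alpha> m) m = 1" by (simp add: coeff_ml cf_top)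
  have "degree (monic_laguerre \<alpha> m) \<le> m"
    by (rule degree_le) (simp add: coeff_ml cf_hi)
  moreover have "m \<le> degree (monic_laguerre \<alpha> m)"
    by (rule le_degree) (simp add: c1)
  ultimately have d: "degree (monic_laguerre \<alpha> m) = m" by simp
  then show ?thesis using c1 by simp
qed

lemma ml_rec_poly: "poly (monic_laguerre \<alpha> (Suc (Suc n))) x =
   (x - (2*real (Suc n)+\<alpha>+1)) * poly (monic_laguerre \<alpha> (Suc n)) x - (real (Suc n) * (real (Suc n) + \<alpha>)) * poly (monic_laguerre \<alpha> n) x"
  by (subst ml_rec) (simp add: algebra_simps)

lemma lag_zeros:
  assumes a: "\<alpha> > -1"
  shows "\<exists>ys. length ys = m \<and> sorted_wrt (<) ys \<and> monic_laguerre \<alpha> m = pr ys \<and>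
           (\<forall>k<m. sgn (poly (monic_laguerre \<alpha> (m-1)) (ys!k)) = (-1)^(m-1-k))"
proof (induction m)
  case 0 then show ?case by (auto simp: ml_0)
next
  case (Suc m)
  show ?case
  proof (cases m)
    case 0
    have "monic_laguerre \<alpha> 1 = pr [\<alpha>+1]" unfolding ml_1 by (simp add: pr_def)
    moreover have "sgn (poly (monic_laguerre \<alpha> 0) ([\<alpha>+1] ! 0)) = 1" by (simp add: ml_0)
    ultimately show ?thesis using 0 by (intro exI[of _ "[\<alpha>+1]"]) auto
  next
    case (Suc n)
    obtain ys where ys: "length ys = m" "sorted_wrt (<) ys" "monic_laguerre \<alpha> m = pr ys"
      "\<forall>k<m. sgn (poly (monic_laguerre \<alpha> (m-1)) (ys!k)) = (-1)^(m-1-k)"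
      using Suc.IH by blast
    define p where "p = monic_laguerre \<alpha> (Suc m)"
    have cpos: "real (Suc n) * (real (Suc n) + \<alpha>) > 0" using a by (simp add: add_pos_pos)
    have sgp: "\<forall>k<length ys. sgn (poly p (ys!k)) = (-1)^(length ys - k)"
    proof (intro allI impI)
      fix k assume k: "k < length ys"
      have z: "poly (monic_laguerre \<alpha> (Suc n)) (ys!k) = 0"
        using ys(1,3) k Suc by (simp add: poly_pr prod_list_zero_iff)
      have "poly p (ys!k) = - (real (Suc n) * (real (Suc n) + \<alpha>)) * poly (monic_laguerre \<alpha> n) (ys!k)"
        unfolding p_def Suc ml_rec_poly z by simp
      then have "sgn (poly p (ys!k)) = sgn (- (real (Suc n) * (real (Suc n) + \<alpha>))) * sgn (poly (monic_laguerre \<alpha> n) (ys!k))"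
        by (simp only: sgn_mult)
      also have "sgn (- (real (Suc n) * (real (Suc n) + \<alpha>))) = -1" using cpos by simp
      finally have "sgn (poly p (ys!k)) = - sgn (poly (monic_laguerre \<alpha> n) (ys!k))" by simp
      also have "\<dots> = - ((-1)^(n-k))" using ys(4) k ys(1) Suc by auto
      also have "\<dots> = (-1)^(length ys - k)" using k ys(1) Suc by (simp add: Suc_diff_le)
      finally show "sgn (poly p (ys!k)) = (-1)^(length ys - k)" .
    qed
    have dp: "degree p = Suc (length ys)" "lead_coeff p = 1"
      using ml_deg[of \<alpha> "Suc m"] ys(1) unfolding p_def by auto
    obtain xs where xs: "length xs = Suc (length ys)" "sorted_wrt (<) xs"
      "p = smult (lead_coeff p) (pr xs)" "\<forall>k<length ys. xs!k < ys!k \<and> ys!k < xs!(Suc k)"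
      using step[OF ys(2) dp(1)] dp(2) sgp by auto
    have pe: "monic_laguerre \<alpha> (Suc m) = pr xs" using xs(3) dp(2) unfolding p_def by simp
    have sgx: "\<forall>k<Suc m. sgn (poly (monic_laguerre \<alpha> (Suc m - 1)) (xs!k)) = (-1)^(Suc m - 1 - k)"
    proof (intro allI impI)
      fix k assume k: "k < Suc m"
      have "sgn (poly (pr ys) (xs!k)) = (-1)^(length ys - k)"
      proof (rule sgn_pr_count[OF ys(2)])
        show "k \<le> length ys" using k ys(1) by simp
        show "k = 0 \<or> ys ! (k - 1) < xs ! k"
          using xs(4) k ys(1) by (cases k) auto
        show "k = length ys \<or> xs ! k < ys ! k"
        proof (cases "k = length ys")
          case False then have "k < length ys" using k ys(1) by simp
          then show ?thesis using xs(4) by blast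
        qed simp
      qed
      then show "sgn (poly (monic_laguerre \<alpha> (Suc m - 1)) (xs!k)) = (-1)^(Suc m - 1 - k)"
        using ys(1,3) by simp
    qed
    show ?thesis using xs(1,2) ys(1) pe sgx by auto
  qed
qed



lemma poly_ml_1: "poly (monic_laguerre \<alpha> (Suc 0)) x = x - \<alpha> - 1"
  using ml_1[of \<alpha>] by simp

lemma ml_neg:
  assumes a: "\<alpha> > -1" and x: "x \<le> 0"
  shows "(-1)^(Suc m) * poly (monic_laguerre \<alpha> (Suc m)) x \<ge> (real (Suc m) + \<alpha>) * ((-1)^m * poly (monic_laguerre \<alpha> m) x)
         \<and> (-1)^m * poly (monic_laguerre \<alpha> m) x > 0"
proof (induction m)
  case 0 then show ?case using x by (simp add: ml_0 poly_ml_1)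
next
  case (Suc m)
  define s0 where "s0 = (-1)^m * poly (monic_laguerre \<alpha> m) x"
  define s1 where "s1 = (-1)^(Suc m) * poly (monic_laguerre \<alpha> (Suc m)) x"
  define s2 where "s2 = (-1)^(Suc (Suc m)) * poly (monic_laguerre \<alpha> (Suc (Suc m))) x"
  have h1: "s1 \<ge> (real (Suc m) + \<alpha>) * s0" "s0 > 0" using Suc unfolding s0_def s1_def by auto
  have pm: "real (Suc m) + \<alpha> > 0" using a by simp
  have s1p: "s1 > 0" using h1 pm by (meson less_le_trans mult_pos_pos)
  have rec: "s2 = ((2*real (Suc m)+\<alpha>+1) - x) * s1 - (real (Suc m) * (real (Suc m) + \<alpha>)) * s0"
    unfolding s0_def s1_def s2_def ml_rec_poly by (simp add: algebra_simps)
  have "(real (Suc m) * (real (Suc m) + \<alpha>)) * s0 \<le> real (Suc m) * s1"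
    using mult_left_mono[OF h1(1), of "real (Suc m)"] by (simp add: algebra_simps)
  then have "s2 \<ge> ((2*real (Suc m)+\<alpha>+1) - x) * s1 - real (Suc m) * s1" using rec by linarith
  moreover have "- x * s1 \<ge> 0" using x s1p by (simp add: mult_nonpos_nonneg)
  ultimately have "s2 \<ge> (real (Suc (Suc m)) + \<alpha>) * s1" by (simp add: algebra_simps)
  then show ?case using s1p unfolding s1_def s2_def by simp
qed

lemma ml_neg_pos: "\<alpha> > -1 \<Longrightarrow> x \<le> 0 \<Longrightarrow> (-1)^m * poly (monic_laguerre \<alpha> m) x > 0"
  using ml_neg by blast

lemma ml_big:
  assumes a: "\<alpha> > -1" and x1: "x \<ge> \<alpha> + 2" and x2: "x \<ge> 4 * real m + 2 * \<alpha> + 2"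
  shows "poly (monic_laguerre \<alpha> (Suc m)) x \<ge> real (Suc m) * poly (monic_laguerre \<alpha> m) x
         \<and> poly (monic_laguerre \<alpha> m) x > 0"
  using x2
proof (induction m)
  case 0 then show ?case using x1 by (simp add: ml_0 poly_ml_1)
next
  case (Suc m)
  define t0 where "t0 = poly (monic_laguerre \<alpha> m) x"
  define t1 where "t1 = poly (monic_laguerre \<alpha> (Suc m)) x"
  define t2 where "t2 = poly (monic_laguerre \<alpha> (Suc (Suc m))) x"
  have h1: "t1 \<ge> real (Suc m) * t0" "t0 > 0" using Suc unfolding t0_def t1_def by auto
  have t1p: "t1 > 0" using h1 by (smt (verit) of_nat_0_less_iff mult_pos_pos zero_less_Suc)
  have rec: "t2 = (x - (2*real (Suc m)+\<alpha>+1)) * t1 - (real (Suc m) * (real (Suc m) + \<alpha>)) * t0"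
    unfolding t0_def t1_def t2_def ml_rec_poly by simp
  have pm: "real (Suc m) + \<alpha> > 0" using a by simp
  have "(real (Suc m) * (real (Suc m) + \<alpha>)) * t0 \<le> (real (Suc m) + \<alpha>) * t1"
    using mult_left_mono[OF h1(1), of "real (Suc m) + \<alpha>"] pm by (simp add: algebra_simps)
  then have "t2 \<ge> (x - (2*real (Suc m)+\<alpha>+1)) * t1 - (real (Suc m) + \<alpha>) * t1" using rec by linarith
  moreover have "(x - (2*real (Suc m)+\<alpha>+1) - (real (Suc m) + \<alpha>)) * t1 \<ge> real (Suc (Suc m)) * t1"
    using Suc.prems t1p by (intro mult_right_mono) auto
  ultimately have "t2 \<ge> real (Suc (Suc m)) * t1" by (simp add: algebra_simps)
  then show ?case using t1p unfolding t1_def t2_def by simp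
qed

lemma ml_big_pos: "\<alpha> > -1 \<Longrightarrow> x \<ge> \<alpha> + 2 \<Longrightarrow> x \<ge> 4 * real m + 2 * \<alpha> + 2 \<Longrightarrow> poly (monic_laguerre \<alpha> (Suc m)) x > 0"
  using ml_big[of \<alpha> x m] by (smt (verit) of_nat_0_less_iff mult_pos_pos zero_less_Suc)

lemma map_poly_of_real_mult:
  "map_poly (of_real :: real \<Rightarrow> complex) (p * q) = map_poly of_real p * map_poly of_real q"
  by (rule poly_eqI) (simp add: coeff_map_poly coeff_mult)

definition cpr :: "real list \<Rightarrow> complex poly" where
  "cpr xs = prod_list (map (\<lambda>y. [:- complex_of_real y, 1:]) xs)"

lemma map_pr: "map_poly complex_of_real (pr xs) = cpr xs"
proof (induction xs)
  case Nil then show ?case by (simp add: cpr_def)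
next
  case (Cons y xs)
  have "map_poly complex_of_real [:-y, 1:] = [:- complex_of_real y, 1:]"
    by (simp add: map_poly_pCons)
  then show ?case unfolding pr_Cons map_poly_of_real_mult Cons.IH by (simp add: cpr_def)
qed

lemma cpr_nonzero: "cpr xs \<noteq> 0"
  by (auto simp: cpr_def prod_list_zero_iff)

lemma cpr_roots: "poly (cpr xs) z = 0 \<longleftrightarrow> z \<in> complex_of_real ` set xs"
  by (induction xs) (auto simp: cpr_def)

lemma cpr_order: "distinct xs \<Longrightarrow> order z (cpr xs) = (if z \<in> complex_of_real ` set xs then 1 else 0)"
proof (induction xs)
  case Nil
  then show ?case by (simp add: cpr_def order_0I)
next
  case (Cons y xs)
  have e: "cpr (y # xs) = [:- complex_of_real y, 1:] * cpr xs" by (simp add: cpr_def)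
  have "order z (cpr (y # xs)) = order z [:- complex_of_real y, 1:] + order z (cpr xs)"
    unfolding e by (rule order_mult) (metis cpr_nonzero e)
  moreover have "order z [:- complex_of_real y, 1:] = (if z = complex_of_real y then 1 else 0)"
  proof (cases "z = complex_of_real y")
    case True
    then show ?thesis using order_power_n_n[of z 1] by simp
  next
    case False
    then have "poly [:- complex_of_real y, 1:] z \<noteq> 0" by simp
    then show ?thesis using False by (simp add: order_0I)
  qed
  moreover have "complex_of_real y \<notin> complex_of_real ` set xs" using Cons.prems by auto
  ultimately show ?case using Cons by auto
qed



lemma ubound:
  fixes \<alpha> y A :: real and N J i :: nat
  assumes z: "poly (monic_laguerre \<alpha> (Suc N)) y = 0" and A: "A = \<bar>poly (monic_laguerre \<alpha> N) y\<bar>" and J: "J \<le> N"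
    and cond: "\<forall>m. N - J < m \<and> m \<le> N \<longrightarrow> \<bar>y - (2*real m + \<alpha> + 1)\<bar> + 1 \<le> 2 * (real m * (real m + \<alpha>))"
  shows "i \<le> J \<Longrightarrow> \<bar>poly (monic_laguerre \<alpha> (N - i)) y\<bar> \<le> 2^i * A \<and> \<bar>poly (monic_laguerre \<alpha> (Suc N - i)) y\<bar> \<le> 2^i * A"
proof (induction i)
  case 0 then show ?case using z A by simp
next
  case (Suc i)
  define m' where "m' = N - Suc i"
  have e1: "N - i = Suc m'" "Suc N - Suc i = Suc m'" "N - Suc i = m'" "Suc N - i = Suc (Suc m')"
    using Suc.prems J unfolding m'_def by auto
  have IH: "\<bar>poly (monic_laguerre \<alpha> (Suc m')) y\<bar> \<le> 2^i * A" "\<bar>poly (monic_laguerre \<alpha> (Suc (Suc m'))) y\<bar> \<le> 2^i * A"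
    using Suc.IH Suc.prems e1 by auto
  define b where "b = 2*real (Suc m') + \<alpha> + 1"
  define c where "c = real (Suc m') * (real (Suc m') + \<alpha>)"
  have "N - J < Suc m' \<and> Suc m' \<le> N" using Suc.prems J unfolding m'_def by auto
  then have cm: "\<bar>y - b\<bar> + 1 \<le> 2 * c"
    using cond unfolding b_def c_def by blast
  then have cpos: "c > 0" by linarith
  have rec: "c * poly (monic_laguerre \<alpha> m') y = (y - b) * poly (monic_laguerre \<alpha> (Suc m')) y - poly (monic_laguerre \<alpha> (Suc (Suc m'))) y"
    unfolding ml_rec_poly b_def c_def by simp
  have "c * \<bar>poly (monic_laguerre \<alpha> m') y\<bar> \<le> \<bar>y - b\<bar> * \<bar>poly (monic_laguerre \<alpha> (Suc m')) y\<bar> + \<bar>poly (monic_laguerre \<alpha> (Suc (Suc m'))) y\<bar>"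
  proof -
    have "c * \<bar>poly (monic_laguerre \<alpha> m') y\<bar> = \<bar>c * poly (monic_laguerre \<alpha> m') y\<bar>" using cpos by (simp add: abs_mult)
    also have "\<dots> \<le> \<bar>(y - b) * poly (monic_laguerre \<alpha> (Suc m')) y\<bar> + \<bar>poly (monic_laguerre \<alpha> (Suc (Suc m'))) y\<bar>"
      unfolding rec by (rule abs_triangle_ineq4)
    finally show ?thesis by (simp add: abs_mult)
  qed
  also have "\<dots> \<le> \<bar>y - b\<bar> * (2^i * A) + 2^i * A"
    using IH by (intro add_mono mult_left_mono) auto
  also have "\<dots> = (\<bar>y - b\<bar> + 1) * (2^i * A)" by (simp add: algebra_simps)
  also have "\<dots> \<le> (2 * c) * (2^i * A)"
    using cm A by (intro mult_right_mono) auto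
  finally have "c * \<bar>poly (monic_laguerre \<alpha> m') y\<bar> \<le> c * (2^Suc i * A)" by (simp add: algebra_simps)
  then have "\<bar>poly (monic_laguerre \<alpha> m') y\<bar> \<le> 2^Suc i * A" using cpos by simp
  moreover have "\<bar>poly (monic_laguerre \<alpha> (Suc m')) y\<bar> \<le> 2^Suc i * A" using IH(1) A by simp
  ultimately show ?case using e1 by simp
qed



lemma final_ineq:
  fixes \<alpha> \<nu> n :: real
  assumes a: "\<alpha> > -1" and nu: "\<nu> > 0" and T2: "\<nu> \<le> 2*n + \<alpha> - 1" and T3: "n \<ge> \<alpha> + 9" and n9: "n \<ge> 9"
  shows "\<nu> * (8*n + 2*\<bar>\<alpha>\<bar>) / 46 < (n - 1) * (n - 1 + \<alpha>)"
proof -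
  have pos: "8*n + 2*\<bar>\<alpha>\<bar> > 0" using n9 by auto
  have "\<nu> * (8*n + 2*\<bar>\<alpha>\<bar>) \<le> (2*n + \<alpha> - 1) * (8*n + 2*\<bar>\<alpha>\<bar>)"
    using T2 pos by (intro mult_right_mono) auto
  also have "\<dots> < 46 * ((n - 1) * (n - 1 + \<alpha>))"
  proof (cases "\<alpha> \<ge> 0")
    case True
    have e1: "(2*n + \<alpha> - 1) * (8*n + 2*\<bar>\<alpha>\<bar>) = 16*(n*n) + 12*(\<alpha>*n) + 2*(\<alpha>*\<alpha>) - 8*n - 2*\<alpha>"
      using True by (simp add: algebra_simps)
    have e2: "46 * ((n - 1) * (n - 1 + \<alpha>)) = 46*(n*n) - 92*n + 46 + 46*(\<alpha>*n) - 46*\<alpha>" by (simp add: algebra_simps)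
    have h1: "\<alpha> * \<alpha> \<le> \<alpha> * n" using True T3 by (intro mult_left_mono) auto
    have h2: "9 * n \<le> n * n" using n9 by (intro mult_right_mono) auto
    have h3: "9 * \<alpha> \<le> \<alpha> * n" using True n9 by (simp add: mult_left_mono mult.commute)
    show ?thesis unfolding e1 e2 using h1 h2 h3 True n9 by linarith
  next
    case False
    have e1: "(2*n + \<alpha> - 1) * (8*n + 2*\<bar>\<alpha>\<bar>) = 16*(n*n) + 4*(\<alpha>*n) - 2*(\<alpha>*\<alpha>) - 8*n + 2*\<alpha>"
      using False by (simp add: algebra_simps)
    have e2: "46 * ((n - 1) * (n - 1 + \<alpha>)) = 46*(n*n) - 92*n + 46 + 46*(\<alpha>*n) - 46*\<alpha>" by (simp add: algebra_simps)
    have h2: "9 * n \<le> n * n" using n9 by (intro mult_right_mono) auto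
    have h4: "\<alpha> * n \<ge> - n" using a n9 mult_right_mono[of "-1" \<alpha> n] by simp
    have h6: "\<alpha> * \<alpha> \<ge> 0" by simp
    show ?thesis unfolding e1 e2 using False h2 h4 h6 a n9 by linarith
  qed
  finally show ?thesis by simp
qed

lemma cond_ineq:
  fixes \<alpha> m n y b :: real
  assumes a: "\<alpha> > -1" and n9: "n \<ge> 9" and m: "2*m \<ge> n + 2" and y: "0 < y" "y < 4*n + 2*\<alpha> - 6"
    and b: "0 < b" "b \<le> 4*n + 2*\<alpha> - 6"
  shows "\<bar>y - b\<bar> + 1 \<le> 2 * (m * (m + \<alpha>))"
proof -
  have "\<bar>y - b\<bar> < 4*n + 2*\<alpha> - 6" using y b by auto
  moreover have "2 * (m * (m + \<alpha>)) \<ge> 4*n + 2*\<alpha> - 5"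
  proof -
    have mp: "m + \<alpha> > 0" "m \<ge> 0" using m n9 a by auto
    have "2 * (m * (m + \<alpha>)) = (2*m) * (m + \<alpha>)" by simp
    also have "\<dots> \<ge> (n + 2) * (m + \<alpha>)" using m mp by (intro mult_right_mono) auto
    finally have i1: "2 * (m * (m + \<alpha>)) \<ge> (n + 2) * (m + \<alpha>)" .
    have "(n + 2) * (m + \<alpha>) \<ge> (n + 2) * ((n+2)/2 + \<alpha>)" using m n9 by (intro mult_left_mono) auto
    moreover have "(n + 2) * ((n+2)/2 + \<alpha>) \<ge> 4*n + 2*\<alpha> - 5"
    proof -
      have h4: "\<alpha> * n \<ge> - n" using a n9 mult_right_mono[of "-1" \<alpha> n] by simp
      have h2: "9 * n \<le> n * n" using n9 by (intro mult_right_mono) auto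
      have e: "(n + 2) * ((n+2)/2 + \<alpha>) = (n*n)/2 + 2*n + 2 + \<alpha>*n + 2*\<alpha>" by (simp add: algebra_simps)
      show ?thesis unfolding e using h4 h2 a n9 by linarith
    qed
    ultimately show ?thesis using i1 by linarith
  qed
  ultimately show ?thesis by linarith
qed



lemma rho_bound:
  fixes \<rho> :: "nat \<Rightarrow> real"
  assumes rp: "\<forall>n. \<rho> n > 0" and nu: "\<nu> > 0" and rr: "\<forall>n\<ge>1. \<rho> (n - 1) / \<rho> n \<le> \<nu>"
  shows "j \<le> n \<Longrightarrow> \<rho> (n - j) \<le> \<nu>^j * \<rho> n"
proof (induction j)
  case 0 then show ?case by simp
next
  case (Suc j)
  have "n - j \<ge> 1" using Suc.prems by simp
  then have "\<rho> (n - j - 1) / \<rho> (n - j) \<le> \<nu>" using rr by blast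
  then have "\<rho> (n - Suc j) \<le> \<nu> * \<rho> (n - j)" using rp by (simp add: divide_le_eq)
  also have "\<dots> \<le> \<nu> * (\<nu>^j * \<rho> n)" using Suc nu by (intro mult_left_mono) auto
  finally show ?case by simp
qed

lemma geom_quot_sum: "geom_quot t K = (\<Sum>i<K - 1. t ^ i)"
  unfolding geom_quot_def by (simp add: geometric_sum)

lemma sum_bound:
  fixes \<alpha> \<nu> :: real and \<gamma> :: "nat \<Rightarrow> real" and K n :: nat
  assumes nu: "\<nu> > 0" and K: "K > 0"
    and T1: "real n \<ge> (23*\<nu>*2^(K-1)*geom_quot (23*\<nu>) K * Max {\<bar>\<gamma> j\<bar> | j. 2 \<le> j \<and> j \<le> K} - 2*\<bar>\<alpha>\<bar>)/8"
  shows "(\<Sum>i<K-1. \<bar>\<gamma> (i+2)\<bar> * \<nu>^(i+2) * 2^i) \<le> \<nu> * (8*real n + 2*\<bar>\<alpha>\<bar>) / 46"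
proof (cases "K = 1")
  case True
  then show ?thesis using nu by simp
next
  case False
  then have K2: "K \<ge> 2" using K by simp
  define S where "S = {\<bar>\<gamma> j\<bar> | j. 2 \<le> j \<and> j \<le> K}"
  define G2 where "G2 = Max S"
  have fin: "finite S" unfolding S_def
  proof -
    have "{\<bar>\<gamma> j\<bar> | j. 2 \<le> j \<and> j \<le> K} = (\<lambda>j. \<bar>\<gamma> j\<bar>) ` {2..K}" by auto
    then show "finite {\<bar>\<gamma> j\<bar> | j. 2 \<le> j \<and> j \<le> K}" by simp
  qed
  have gle: "\<bar>\<gamma> (i+2)\<bar> \<le> G2" if "i < K - 1" for i
    unfolding G2_def by (rule Max_ge[OF fin]) (use that in \<open>auto simp: S_def\<close>)
  have G2nn: "G2 \<ge> 0"
  proof -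
    have "\<bar>\<gamma> (0+2)\<bar> \<le> G2" using gle K2 by simp
    then show ?thesis by (meson abs_ge_zero order_trans)
  qed
  define t where "t = 23 * \<nu>"
  have trm: "\<bar>\<gamma> (i+2)\<bar> * \<nu>^(i+2) * 2^i \<le> \<nu> * G2 * 2^(K-1) * t^(i+1) / 46" if "i < K - 1" for i
  proof -
    have p1: "(2::real)^(i+1) \<le> 2^(K-1)" using that by (intro power_increasing) auto
    have p2: "(23::real) \<le> 23^(i+1)" by (metis Suc_eq_plus1 le_add2 one_le_numeral power_increasing power_one_right numeral_One One_nat_def)
    have "46 * 2^i = (23::real) * 2^(i+1)" by simp
    also have "\<dots> \<le> 23^(i+1) * 2^(K-1)" using p1 p2 by (intro mult_mono) auto
    finally have p3: "46 * 2^i \<le> (23::real)^(i+1) * 2^(K-1)" .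
    have "\<bar>\<gamma> (i+2)\<bar> * \<nu>^(i+2) * 2^i \<le> G2 * \<nu>^(i+2) * 2^i"
      using gle[OF that] nu by (intro mult_right_mono) auto
    also have "\<dots> = G2 * \<nu> * \<nu>^(i+1) * (46 * 2^i) / 46" by (simp add: power_add)
    also have "\<dots> \<le> G2 * \<nu> * \<nu>^(i+1) * (23^(i+1) * 2^(K-1)) / 46"
      using p3 G2nn nu by (intro divide_right_mono mult_left_mono) auto
    also have "\<dots> = \<nu> * G2 * 2^(K-1) * t^(i+1) / 46" unfolding t_def by (simp add: power_mult_distrib)
    finally show ?thesis .
  qed
  have "(\<Sum>i<K-1. \<bar>\<gamma> (i+2)\<bar> * \<nu>^(i+2) * 2^i) \<le> (\<Sum>i<K-1. \<nu> * G2 * 2^(K-1) * t^(i+1) / 46)"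
    by (rule sum_mono) (use trm in auto)
  also have "\<dots> = \<nu> * (t * 2^(K-1) * geom_quot t K * G2) / 46"
  proof -
    have "(\<Sum>i<K-1. \<nu> * G2 * 2^(K-1) * t^(i+1) / 46) = (\<nu> * G2 * 2^(K-1) * t / 46) * (\<Sum>i<K-1. t^i)"
      unfolding sum_distrib_left by (rule sum.cong) (simp_all add: power_Suc)
    then show ?thesis unfolding geom_quot_sum by (simp add: algebra_simps)
  qed
  also have "\<dots> \<le> \<nu> * (8*real n + 2*\<bar>\<alpha>\<bar>) / 46"
  proof -
    have "t * 2^(K-1) * geom_quot t K * G2 \<le> 8*real n + 2*\<bar>\<alpha>\<bar>"
      using T1 unfolding t_def G2_def S_def by (simp add: algebra_simps)
    then show ?thesis using nu by (intro divide_right_mono mult_left_mono) auto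
  qed
  finally show ?thesis .
qed



lemma sgn_dom: "\<bar>e\<bar> < \<bar>a\<bar> \<Longrightarrow> sgn (a + e) = sgn (a::real)"
  by (auto simp: sgn_if)

lemma sum_split2:
  fixes f :: "nat \<Rightarrow> 'a::comm_monoid_add"
  assumes "K > 0"
  shows "(\<Sum>j\<le>K. f j) = f 0 + f 1 + (\<Sum>i<K-1. f (i+2))"
proof -
  obtain K' where K': "K = Suc K'" using assms by (cases K) auto
  have "(\<Sum>j\<le>K. f j) = f 0 + (\<Sum>j<K. f (Suc j))" by (rule sum.atMost_shift)
  also have "(\<Sum>j<K. f (Suc j)) = f 1 + (\<Sum>i<K'. f (Suc (Suc i)))"
    unfolding K' by (subst sum.lessThan_Suc_shift) simp
  finally show ?thesis using K' by (simp add: add.assoc)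
qed

lemma q_coeff_deg:
  fixes \<alpha> :: real and \<rho> \<gamma> :: "nat \<Rightarrow> real" and K n :: nat and p :: "real poly"
  assumes K: "K > 0" "K \<le> n" and g0: "\<gamma> 0 = 1" and rp: "\<rho> n > 0"
    and pdef: "p = (\<Sum>j\<le>K. smult (\<gamma> j * \<rho> (n - j)) (monic_laguerre \<alpha> (n - j)))"
  shows "degree p = n \<and> lead_coeff p = \<rho> n"
proof -
  have c: "coeff p i = \<rho> n * coeff (monic_laguerre \<alpha> n) i" if "i \<ge> n" for i
  proof -
    have "coeff p i = (\<Sum>j\<le>K. \<gamma> j * \<rho> (n - j) * coeff (monic_laguerre \<alpha> (n - j)) i)"
      unfolding pdef by (simp add: coeff_sum)
    also have "\<dots> = \<gamma> 0 * \<rho> (n - 0) * coeff (monic_laguerre \<alpha> (n - 0)) i + (\<Sum>j<K. \<gamma> (Suc j) * \<rho> (n - Suc j) * coeff (monic_laguerre \<alpha> (n - Suc j)) i)"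
      by (rule sum.atMost_shift)
    also have "(\<Sum>j<K. \<gamma> (Suc j) * \<rho> (n - Suc j) * coeff (monic_laguerre \<alpha> (n - Suc j)) i) = 0"
    proof (rule sum.neutral, intro ballI)
      fix j assume "j \<in> {..<K}"
      then have "n - Suc j < i" using K that by auto
      then show "\<gamma> (Suc j) * \<rho> (n - Suc j) * coeff (monic_laguerre \<alpha> (n - Suc j)) i = 0"
        by (simp add: coeff_ml cf_hi)
    qed
    finally show ?thesis using g0 by simp
  qed
  have cn: "coeff p n = \<rho> n" using c[of n] by (simp add: coeff_ml cf_top)
  have "degree p \<le> n"
    by (rule degree_le) (auto simp: c coeff_ml cf_hi)
  moreover have "n \<le> degree p" by (rule le_degree) (use cn rp in auto)
  ultimately show ?thesis using cn by simp
qed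



lemma core:
  fixes \<alpha> \<nu> :: real and \<rho> \<gamma> :: "nat \<Rightarrow> real" and K n :: nat and p :: "real poly" and ys :: "real list"
  assumes a: "\<alpha> > -1" and rp: "\<forall>n. \<rho> n > 0" and nu: "\<nu> > 0" and rr: "\<forall>n\<ge>1. \<rho> (n - 1) / \<rho> n \<le> \<nu>"
    and K: "K > 0" and g0: "\<gamma> 0 = 1"
    and pdef: "p = (\<Sum>j\<le>K. smult (\<gamma> j * \<rho> (n - j)) (monic_laguerre \<alpha> (n - j)))"
    and T1: "real n \<ge> (23*\<nu>*2^(K-1)*geom_quot (23*\<nu>) K * Max {\<bar>\<gamma> j\<bar> | j. 2 \<le> j \<and> j \<le> K} - 2*\<bar>\<alpha>\<bar>)/8"
    and T2: "real n \<ge> (\<nu> - \<alpha> + 1)/2" and T3: "real n \<ge> \<alpha> + 9" and T4: "n \<ge> 2*K"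
    and ys: "length ys = n - 1" "sorted_wrt (<) ys" "monic_laguerre \<alpha> (n-1) = pr ys"
      "\<forall>k<n-1. sgn (poly (monic_laguerre \<alpha> (n-1-1)) (ys!k)) = (-1)^(n-1-1-k)"
  shows "\<exists>xs. length xs = n \<and> sorted_wrt (<) xs \<and> p = smult (\<rho> n) (pr xs) \<and> (\<forall>k<n-1. xs!k < ys!k \<and> ys!k < xs!(Suc k))"
proof -
  have "real n > 8" using T3 a by linarith
  then have n9: "n \<ge> 9" by simp
  then have n9r: "real n \<ge> 9" by simp
  have rn: "\<rho> n > 0" using rp by blast
  define Lg where "Lg = monic_laguerre \<alpha>"
  define N where "N = n - 2"
  have nN: "n = Suc (Suc N)" "n - 1 = Suc N" "n - 1 - 1 = N" using n9 unfolding N_def by auto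
  have dl: "degree p = n \<and> lead_coeff p = \<rho> n"
    by (rule q_coeff_deg[OF K _ g0 _ pdef]) (use T4 rp in auto)
  define C where "C = real (Suc N) * (real (Suc N) + \<alpha>)"
  have Ceq: "C = (real n - 1) * (real n - 1 + \<alpha>)" unfolding C_def using nN by simp
  have Cpos: "C > 0" unfolding C_def using a by simp
  define D where "D = 4 * real n + 2 * \<alpha> - 6"
  have sgq: "\<forall>k<length ys. sgn (poly p (ys!k)) = (-1)^(length ys - k)"
  proof (intro allI impI)
    fix k assume k: "k < length ys"
    define y where "y = ys ! k"
    have z: "poly (Lg (Suc N)) y = 0"
      using ys(1,3) k nN unfolding y_def Lg_def by (simp add: poly_pr prod_list_zero_iff)
    have sN: "sgn (poly (Lg N) y) = (-1)^(N - k)"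
      using ys(4) k ys(1) nN unfolding y_def Lg_def by auto
    define A where "A = \<bar>poly (Lg N) y\<bar>"
    have Apos: "A > 0" using sN unfolding A_def by (auto simp: sgn_if split: if_splits)
    have ypos: "y > 0"
    proof (rule ccontr)
      assume "\<not> y > 0"
      then have "y \<le> 0" by simp
      then have "(-1)^(Suc N) * poly (Lg (Suc N)) y > 0" using ml_neg_pos[OF a] unfolding Lg_def by blast
      then show False using z by simp
    qed
    have ylt: "y < D"
    proof (rule ccontr)
      assume "\<not> y < D"
      then have "y \<ge> \<alpha> + 2" "y \<ge> 4 * real (n - 2) + 2 * \<alpha> + 2" using n9 a unfolding D_def by (auto simp: of_nat_diff)
      then have "poly (Lg (Suc (n - 2))) y > 0" using ml_big_pos[OF a] unfolding Lg_def by blast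
      then show False using z unfolding N_def by simp
    qed
    have Pn: "poly (Lg n) y = - C * poly (Lg N) y"
      unfolding nN Lg_def ml_rec_poly using z unfolding Lg_def C_def by simp
    have ub: "\<bar>poly (Lg (N - i)) y\<bar> \<le> 2^i * A" if "i < K - 1" for i
    proof -
      have J: "K - 2 \<le> N" using T4 unfolding N_def by simp
      have cond: "\<forall>m. N - (K - 2) < m \<and> m \<le> N \<longrightarrow> \<bar>y - (2*real m + \<alpha> + 1)\<bar> + 1 \<le> 2 * (real m * (real m + \<alpha>))"
      proof (intro allI impI)
        fix m assume m: "N - (K - 2) < m \<and> m \<le> N"
        have m2: "2 * real m \<ge> real n + 2" using m T4 nN by linarith
        have bpos: "0 < 2*real m + \<alpha> + 1" using a by simp
        have ble: "2*real m + \<alpha> + 1 \<le> D" using m nN n9 a unfolding D_def by simp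
        show "\<bar>y - (2*real m + \<alpha> + 1)\<bar> + 1 \<le> 2 * (real m * (real m + \<alpha>))"
          by (rule cond_ineq[OF a n9r m2 ypos _ bpos]) (use ylt ble D_def in auto)
      qed
      have "i \<le> K - 2" using that by simp
      then show ?thesis using ubound[OF z[unfolded Lg_def] A_def[unfolded Lg_def] J cond] unfolding Lg_def by blast
    qed
    define f where "f j = \<gamma> j * \<rho> (n - j) * poly (Lg (n - j)) y" for j
    have "poly p y = (\<Sum>j\<le>K. f j)"
      unfolding pdef poly_sum poly_smult f_def Lg_def by simp
    then have pq: "poly p y = f 0 + f 1 + (\<Sum>i<K-1. f (i+2))"
      using sum_split2[OF K, of f] by simp
    have f0: "f 0 = \<rho> n * (- C * poly (Lg N) y)" unfolding f_def using g0 Pn by simp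
    have f1: "f 1 = 0" unfolding f_def using z nN by simp
    define E where "E = (\<Sum>i<K-1. f (i+2))"
    have "\<bar>E\<bar> \<le> (\<Sum>i<K-1. \<bar>f (i+2)\<bar>)" unfolding E_def by (rule sum_abs)
    also have "\<dots> \<le> (\<Sum>i<K-1. \<bar>\<gamma> (i+2)\<bar> * \<nu>^(i+2) * 2^i * (\<rho> n * A))"
    proof (rule sum_mono)
      fix i assume i: "i \<in> {..<K-1}"
      have e: "n - (i+2) = N - i" using nN by simp
      have r: "\<rho> (n - (i+2)) \<le> \<nu>^(i+2) * \<rho> n" using rho_bound[OF rp nu rr, of "i+2" n] i T4 by simp
      have "\<bar>f (i+2)\<bar> = \<bar>\<gamma> (i+2)\<bar> * \<rho> (n - (i+2)) * \<bar>poly (Lg (N - i)) y\<bar>"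
      proof -
        have "\<bar>\<rho> (N - i)\<bar> = \<rho> (N - i)" using rp by (simp add: less_imp_le)
        then show ?thesis unfolding f_def e by (simp add: abs_mult)
      qed
      also have "\<dots> \<le> \<bar>\<gamma> (i+2)\<bar> * (\<nu>^(i+2) * \<rho> n) * (2^i * A)"
      proof -
        have p1: "0 \<le> \<rho> (n - (i+2))" "0 \<le> \<rho> n" using rp by (auto simp: less_imp_le)
        have p2: "0 \<le> \<nu>^(i+2)" using nu by simp
        show ?thesis using r ub[of i] i p1 p2 by (intro mult_mono) auto
      qed
      finally show "\<bar>f (i+2)\<bar> \<le> \<bar>\<gamma> (i+2)\<bar> * \<nu>^(i+2) * 2^i * (\<rho> n * A)" by (simp add: algebra_simps)
    qed
    also have "\<dots> = (\<Sum>i<K-1. \<bar>\<gamma> (i+2)\<bar> * \<nu>^(i+2) * 2^i) * (\<rho> n * A)"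
      by (simp add: sum_distrib_right)
    also have "\<dots> \<le> (\<nu> * (8*real n + 2*\<bar>\<alpha>\<bar>) / 46) * (\<rho> n * A)"
      using sum_bound[OF nu K T1] rn Apos by (intro mult_right_mono) (auto simp: less_imp_le)
    also have "\<dots> < C * (\<rho> n * A)"
    proof -
      have "\<nu> - \<alpha> + 1 \<le> 2 * real n" using T2 by (simp add: divide_le_eq)
      then have "\<nu> \<le> 2 * real n + \<alpha> - 1" by linarith
      then have "\<nu> * (8*real n + 2*\<bar>\<alpha>\<bar>) / 46 < C"
        unfolding Ceq using final_ineq[OF a nu _ T3 n9r] by blast
      then show ?thesis using rn Apos by (intro mult_strict_right_mono) auto
    qed
    finally have Eb: "\<bar>E\<bar> < \<bar>\<rho> n * (- C * poly (Lg N) y)\<bar>"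
      using rn Cpos unfolding A_def by (simp add: abs_mult algebra_simps)
    have "sgn (poly p y) = sgn (\<rho> n * (- C * poly (Lg N) y))"
      unfolding pq f0 f1 E_def[symmetric] using sgn_dom[OF Eb] by simp
    also have "\<dots> = - sgn (poly (Lg N) y)" using rn Cpos by (simp add: sgn_mult)
    also have "\<dots> = (-1)^(length ys - k)"
      using sN ys(1) nN k by (simp add: Suc_diff_le)
    finally show "sgn (poly p (ys!k)) = (-1)^(length ys - k)" unfolding y_def .
  qed
  have dp: "degree p = Suc (length ys)" using dl ys(1) nN by simp
  have lp: "lead_coeff p > 0" using dl rn by metis
  obtain xs where xs: "length xs = Suc (length ys)" "sorted_wrt (<) xs" "p = smult (lead_coeff p) (pr xs)"
      "\<forall>k<length ys. xs!k < ys!k \<and> ys!k < xs!(Suc k)"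
    using step[OF ys(2) dp lp sgq] by blast
  show ?thesis using xs dl ys(1) nN by (intro exI[of _ xs]) auto
qed



lemma q0_pos:
  fixes \<alpha> \<nu> :: real and \<rho> \<gamma> :: "nat \<Rightarrow> real" and K n :: nat and p :: "real poly"
  assumes a: "\<alpha> > -1" and rp: "\<forall>n. \<rho> n > 0" and nu: "\<nu> > 0" and rr: "\<forall>n\<ge>1. \<rho> (n - 1) / \<rho> n \<le> \<nu>"
    and K: "K > 0" and g0: "\<gamma> 0 = 1"
    and pdef: "p = (\<Sum>j\<le>K. smult (\<gamma> j * \<rho> (n - j)) (monic_laguerre \<alpha> (n - j)))"
    and nK: "K \<le> n" and big: "real n - real K + 1 + \<alpha> > \<nu> * (1 + (\<Sum>j\<le>K. \<bar>\<gamma> j\<bar>))"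
  shows "(-1)^n * poly p 0 > 0"
proof -
  define M where "M = real n - real K + 1 + \<alpha>"
  define G where "G = (\<Sum>j\<le>K. \<bar>\<gamma> j\<bar>)"
  have G0: "G \<ge> 0" unfolding G_def by (simp add: sum_nonneg)
  have nuM: "\<nu> * (1 + G) < M" using big unfolding M_def G_def by simp
  have nG: "\<nu> * G \<ge> 0" using nu G0 by simp
  have e1: "\<nu> * (1 + G) = \<nu> + \<nu> * G" by (simp add: algebra_simps)
  have nuM2: "\<nu> < M" "\<nu> * G < M" using nuM nG nu unfolding e1 by linarith+
  have Mpos: "M > 0" using nuM2 nu by linarith
  define s where "s m = (-1)^m * poly (monic_laguerre \<alpha> m) 0" for m
  have spos: "s m > 0" for m unfolding s_def using ml_neg_pos[OF a] by simp
  have srec: "s (Suc m) \<ge> (real (Suc m) + \<alpha>) * s m" for m unfolding s_def using ml_neg[OF a, of 0 m] by simp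
  have sb: "M^j * s (n - j) \<le> s n" if "j \<le> K" for j
    using that
  proof (induction j)
    case 0 then show ?case by simp
  next
    case (Suc j)
    have e: "n - j = Suc (n - Suc j)" using Suc.prems nK by simp
    have "M \<le> real (Suc (n - Suc j)) + \<alpha>" using Suc.prems nK unfolding M_def by (simp add: of_nat_diff)
    then have "M * s (n - Suc j) \<le> (real (Suc (n - Suc j)) + \<alpha>) * s (n - Suc j)"
      using spos by (intro mult_right_mono) (auto simp: less_imp_le)
    also have "\<dots> \<le> s (n - j)" using srec[of "n - Suc j"] e by simp
    finally have "M^Suc j * s (n - Suc j) \<le> M^j * s (n - j)"
      using Mpos by (simp add: mult.assoc mult_left_mono)
    then show ?case using Suc by simp
  qed
  define g where "g j = \<gamma> j * (-1)^j * \<rho> (n - j) * s (n - j)" for j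
  have "(-1)^n * poly p 0 = (\<Sum>j\<le>K. g j)"
    unfolding pdef poly_sum poly_smult sum_distrib_left
  proof (rule sum.cong)
    fix j assume "j \<in> {..K}"
    then have j: "j \<le> n" using nK by simp
    have "(-1::real)^n = (-1)^j * (-1)^(n-j)" using j by (simp flip: power_add)
    then show "(-1)^n * (\<gamma> j * \<rho> (n - j) * poly (monic_laguerre \<alpha> (n - j)) 0) = g j"
      unfolding g_def s_def by simp
  qed simp
  also have "\<dots> = g 0 + (\<Sum>j<K. g (Suc j))" by (rule sum.atMost_shift)
  finally have eq: "(-1)^n * poly p 0 = \<rho> n * s n + (\<Sum>j<K. g (Suc j))" using g0 unfolding g_def by simp
  have rn: "\<rho> n > 0" using rp by blast
  have tb: "\<bar>g (Suc j)\<bar> \<le> \<bar>\<gamma> (Suc j)\<bar> * (\<nu> / M) * (\<rho> n * s n)" if "j < K" for j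
  proof -
    have r: "\<rho> (n - Suc j) \<le> \<nu>^Suc j * \<rho> n" using rho_bound[OF rp nu rr, of "Suc j" n] that nK by simp
    have Mp: "M^Suc j > 0" using Mpos by simp
    have sj: "s (n - Suc j) \<le> s n / M^Suc j"
      using sb[of "Suc j"] that Mp by (simp add: pos_le_divide_eq mult.commute)
    have q1: "\<nu> / M \<le> 1" "\<nu> / M > 0" using nuM2 Mpos nu by (simp_all add: divide_le_eq)
    have pj: "(\<nu>/M)^j \<le> 1" by (rule power_le_one) (use q1 in auto)
    have pw: "(\<nu>/M)^Suc j \<le> \<nu>/M"
      unfolding power_Suc using mult_left_mono[OF pj, of "\<nu>/M"] q1 by simp
    have "\<bar>g (Suc j)\<bar> = \<bar>\<gamma> (Suc j)\<bar> * \<rho> (n - Suc j) * s (n - Suc j)"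
      unfolding g_def using rp spos by (simp add: abs_mult less_imp_le)
    also have "\<dots> \<le> \<bar>\<gamma> (Suc j)\<bar> * (\<nu>^Suc j * \<rho> n) * (s n / M^Suc j)"
    proof -
      have "0 \<le> \<nu>^Suc j * \<rho> n" using nu rn by simp
      then show ?thesis using r sj rp spos by (intro mult_mono) (auto simp: less_imp_le)
    qed
    also have "\<dots> = \<bar>\<gamma> (Suc j)\<bar> * (\<nu>/M)^Suc j * (\<rho> n * s n)" by (simp add: power_divide)
    also have "\<dots> \<le> \<bar>\<gamma> (Suc j)\<bar> * (\<nu>/M) * (\<rho> n * s n)"
      using pw rn spos by (intro mult_right_mono mult_left_mono) (auto simp: less_imp_le)
    finally show ?thesis .
  qed
  have "\<bar>\<Sum>j<K. g (Suc j)\<bar> \<le> (\<Sum>j<K. \<bar>g (Suc j)\<bar>)" by (rule sum_abs)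
  also have "\<dots> \<le> (\<Sum>j<K. \<bar>\<gamma> (Suc j)\<bar> * (\<nu> / M) * (\<rho> n * s n))" by (rule sum_mono) (use tb in auto)
  also have "\<dots> = (\<nu> / M) * (\<rho> n * s n) * (\<Sum>j<K. \<bar>\<gamma> (Suc j)\<bar>)"
    unfolding sum_distrib_left by (rule sum.cong) (simp_all add: algebra_simps)
  also have "\<dots> \<le> (\<nu> / M) * (\<rho> n * s n) * G"
  proof -
    have "(\<Sum>j<K. \<bar>\<gamma> (Suc j)\<bar>) \<le> G" unfolding G_def sum.atMost_shift by simp
    then show ?thesis using nu Mpos rn spos by (intro mult_left_mono) (auto simp: less_imp_le)
  qed
  also have "\<dots> < \<rho> n * s n"
  proof -
    have "(\<nu> / M) * G < 1" using Mpos nuM2(2) by (simp add: divide_less_eq)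
    moreover have X: "\<rho> n * s n > 0" using rn spos[of n] by simp
    ultimately have "(\<rho> n * s n) * ((\<nu> / M) * G) < (\<rho> n * s n) * 1"
      by (intro mult_strict_left_mono) auto
    then show ?thesis by (simp add: algebra_simps)
  qed
  finally show ?thesis unfolding eq by linarith
qed



lemma sorted_idx_less:
  assumes "sorted_wrt (<) xs" "i < length xs" "j < length xs" "xs ! i < (xs ! j :: real)"
  shows "i < j"
proof (rule ccontr)
  assume "\<not> i < j"
  then have "j < i \<or> j = i" by auto
  then show False
  proof
    assume "j < i"
    then have "xs ! j < xs ! i" using sorted_wrt_nth_less[OF assms(1)] assms(2) by blast
    then show False using assms(4) by simp
  qed (use assms(4) in simp)
qed

lemma sorted_min: "sorted_wrt (<) xs \<Longrightarrow> xs \<noteq> [] \<Longrightarrow> Min (set xs) = xs ! (0::nat)" for xs :: "real list"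
proof (rule Min_eqI)
  fix y assume s: "sorted_wrt (<) xs" and y: "y \<in> set xs"
  then obtain j where j: "j < length xs" "y = xs ! j" by (auto simp: in_set_conv_nth)
  show "xs ! 0 \<le> y"
  proof (cases j)
    case (Suc j') then show ?thesis using sorted_wrt_nth_less[OF s, of 0 j] j by auto
  qed (use j in simp)
qed auto

lemma interlace_lists:
  fixes xs ys :: "real list"
  assumes sx: "sorted_wrt (<) xs" and sy: "sorted_wrt (<) ys" and lx: "length xs = Suc m" and ly: "length ys = m"
    and m: "m \<ge> 1" and il: "\<forall>k<m. xs!k < ys!k \<and> ys!k < xs!(Suc k)"
  shows "interlaces (set xs) (set ys)"
  unfolding interlaces_def
proof (intro conjI)
  show "finite (set xs)" "finite (set ys)" by auto
  show "set xs \<noteq> {}" "set ys \<noteq> {}" using lx ly m by auto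
  show "Min (set xs) < Min (set ys)"
  proof -
    have "xs \<noteq> []" "ys \<noteq> []" using lx ly m by auto
    then have "Min (set xs) = xs ! 0" "Min (set ys) = ys ! 0" using sorted_min[OF sx] sorted_min[OF sy] by auto
    moreover have "xs ! 0 < ys ! 0" using il m by auto
    ultimately show ?thesis by simp
  qed
  show "\<forall>a\<in>set xs. \<forall>b\<in>set xs. a < b \<and> \<not> (\<exists>c\<in>set xs. a < c \<and> c < b) \<longrightarrow> (\<exists>v\<in>set ys. a < v \<and> v < b)"
  proof (intro ballI impI)
    fix a b assume a: "a \<in> set xs" and b: "b \<in> set xs" and h: "a < b \<and> \<not> (\<exists>c\<in>set xs. a < c \<and> c < b)"
    obtain i where i: "i < length xs" "a = xs ! i" using a by (auto simp: in_set_conv_nth)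
    obtain j where j: "j < length xs" "b = xs ! j" using b by (auto simp: in_set_conv_nth)
    have ij: "i < j" using sorted_idx_less[OF sx i(1) j(1)] h i j by simp
    have "j = Suc i"
    proof (rule ccontr)
      assume "j \<noteq> Suc i"
      then have "Suc i < j" using ij by simp
      then have "xs ! i < xs ! Suc i" "xs ! Suc i < xs ! j"
        using sorted_wrt_nth_less[OF sx] j(1) by auto
      moreover have "xs ! Suc i \<in> set xs" using \<open>Suc i < j\<close> j(1) by simp
      ultimately show False using h i j by blast
    qed
    then have "i < m" using j(1) lx by simp
    then show "\<exists>v\<in>set ys. a < v \<and> v < b"
      using il i j \<open>j = Suc i\<close> ly by (intro bexI[of _ "ys ! i"]) auto
  qed
  show "\<forall>a\<in>set ys. \<forall>b\<in>set ys. a < b \<and> \<not> (\<exists>c\<in>set ys. a < c \<and> c < b) \<longrightarrow> (\<exists>u\<in>set xs. a < u \<and> u < b)"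
  proof (intro ballI impI)
    fix a b assume a: "a \<in> set ys" and b: "b \<in> set ys" and h: "a < b \<and> \<not> (\<exists>c\<in>set ys. a < c \<and> c < b)"
    obtain i where i: "i < length ys" "a = ys ! i" using a by (auto simp: in_set_conv_nth)
    obtain j where j: "j < length ys" "b = ys ! j" using b by (auto simp: in_set_conv_nth)
    have ij: "i < j" using sorted_idx_less[OF sy i(1) j(1)] h i j by simp
    have "j = Suc i"
    proof (rule ccontr)
      assume "j \<noteq> Suc i"
      then have "Suc i < j" using ij by simp
      then have "ys ! i < ys ! Suc i" "ys ! Suc i < ys ! j"
        using sorted_wrt_nth_less[OF sy] j(1) by auto
      moreover have "ys ! Suc i \<in> set ys" using \<open>Suc i < j\<close> j(1) by simp
      ultimately show False using h i j by blast
    qed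
    then show "\<exists>u\<in>set xs. a < u \<and> u < b"
      using il i j ly lx by (intro bexI[of _ "xs ! Suc i"]) auto
  qed
qed



theorem mainTheorem7:
  fixes \<alpha> \<nu> :: real and \<rho> \<gamma> :: "nat \<Rightarrow> real" and K :: nat and q :: "nat \<Rightarrow> real poly"
  assumes "\<alpha> > -1"
    and "\<forall>n. \<rho> n > 0"
    and "\<nu> > 0"
    and "\<forall>n\<ge>1. \<rho> (n - 1) / \<rho> n \<le> \<nu>"
    and "K > 0"
    and "\<gamma> 0 = 1" and "\<gamma> K \<noteq> 0"
    and "\<And>n. q n = (\<Sum>j\<le>K. smult (\<gamma> j * \<rho> (n - j)) (monic_laguerre \<alpha> (n - j)))"
  defines "\<Gamma>2 \<equiv> Max {\<bar>\<gamma> j\<bar> | j. 2 \<le> j \<and> j \<le> K}"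
  shows "(\<forall>n::nat.
            real n \<ge> (23 * \<nu> * 2 ^ (K - 1) * geom_quot (23 * \<nu>) K * \<Gamma>2 - 2 * \<bar>\<alpha>\<bar>) / 8 \<and>
            real n \<ge> (\<nu> - \<alpha> + 1) / 2 \<and> real n \<ge> \<alpha> + 9 \<and> n \<ge> 2 * K \<longrightarrow>
              (\<forall>z::complex. poly (map_poly complex_of_real (q n)) z = 0 \<longrightarrow>
                  z \<in> \<real> \<and> order z (map_poly complex_of_real (q n)) = 1) \<and>
              interlaces {x. poly (q n) x = 0} {x. poly (laguerre \<alpha> (n - 1)) x = 0})
       \<and> (\<forall>\<^sub>F n in sequentially. \<forall>z::complex. poly (map_poly complex_of_real (q n)) z = 0 \<longrightarrow>
              z \<in> \<real> \<and> Re z > 0)"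
proof -
  note a = assms(1) and rp = assms(2) and nu = assms(3) and rr = assms(4) and K = assms(5)
    and g0 = assms(6) and qd = assms(8)
  define T where "T n \<longleftrightarrow> real n \<ge> (23 * \<nu> * 2 ^ (K - 1) * geom_quot (23 * \<nu>) K * \<Gamma>2 - 2 * \<bar>\<alpha>\<bar>) / 8 \<and>
            real n \<ge> (\<nu> - \<alpha> + 1) / 2 \<and> real n \<ge> \<alpha> + 9 \<and> n \<ge> 2 * K" for n
  have decomp: "\<exists>xs ys. length xs = n \<and> sorted_wrt (<) xs \<and> q n = smult (\<rho> n) (pr xs) \<and>
      length ys = n - 1 \<and> sorted_wrt (<) ys \<and> monic_laguerre \<alpha> (n - 1) = pr ys \<and>
      (\<forall>k<n-1. xs!k < ys!k \<and> ys!k < xs!(Suc k))" if Tn: "T n" for n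
  proof -
    obtain ys where ys: "length ys = n - 1" "sorted_wrt (<) ys" "monic_laguerre \<alpha> (n - 1) = pr ys"
      "\<forall>k<n-1. sgn (poly (monic_laguerre \<alpha> (n-1-1)) (ys!k)) = (-1)^(n-1-1-k)"
      using lag_zeros[OF a, of "n - 1"] by blast
    have T1: "real n \<ge> (23*\<nu>*2^(K-1)*geom_quot (23*\<nu>) K * Max {\<bar>\<gamma> j\<bar> | j. 2 \<le> j \<and> j \<le> K} - 2*\<bar>\<alpha>\<bar>)/8"
      using Tn unfolding T_def \<Gamma>2_def by simp
    have T2: "real n \<ge> (\<nu> - \<alpha> + 1)/2" and T3: "real n \<ge> \<alpha> + 9" and T4: "n \<ge> 2*K"
      using Tn unfolding T_def by auto
    obtain xs where "length xs = n \<and> sorted_wrt (<) xs \<and> q n = smult (\<rho> n) (pr xs) \<and> (\<forall>k<n-1. xs!k < ys!k \<and> ys!k < xs!(Suc k))"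
      using core[OF a rp nu rr K g0 qd[of n] T1 T2 T3 T4 ys] by blast
    then show ?thesis using ys by blast
  qed
  have n9: "n \<ge> 9" if "T n" for n
  proof -
    have "real n > 8" using that a unfolding T_def by linarith
    then show ?thesis by simp
  qed
  have zq: "{x. poly (q n) x = 0} = set xs" if "q n = smult (\<rho> n) (pr xs)" for n xs
  proof -
    have "\<rho> n \<noteq> 0" using rp by (metis less_irrefl)
    then show ?thesis using that by (auto simp: poly_pr prod_list_zero_iff)
  qed
  have zl: "{x. poly (laguerre \<alpha> m) x = 0} = set ys" if "monic_laguerre \<alpha> m = pr ys" for m ys
  proof -
    have c: "((-1) ^ m * fact m :: real) \<noteq> 0" by simp
    have "poly (laguerre \<alpha> m) x = 0 \<longleftrightarrow> poly (monic_laguerre \<alpha> m) x = 0" for x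
      unfolding monic_laguerre_def using c by simp
    then show ?thesis using that by (auto simp: poly_pr prod_list_zero_iff)
  qed
  have cq: "map_poly complex_of_real (q n) = smult (complex_of_real (\<rho> n)) (cpr xs)" if "q n = smult (\<rho> n) (pr xs)" for n xs
    unfolding that map_pr[symmetric] by (rule map_poly_smult) auto
  have croots: "poly (map_poly complex_of_real (q n)) z = 0 \<longleftrightarrow> z \<in> complex_of_real ` set xs"
    if "q n = smult (\<rho> n) (pr xs)" for n xs z
  proof -
    have "complex_of_real (\<rho> n) \<noteq> 0" using rp by (metis less_irrefl of_real_eq_0_iff)
    then show ?thesis unfolding cq[OF that] by (simp add: cpr_roots)
  qed
  have part1: "(\<forall>z::complex. poly (map_poly complex_of_real (q n)) z = 0 \<longrightarrow>
                  z \<in> \<real> \<and> order z (map_poly complex_of_real (q n)) = 1) \<and>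
              interlaces {x. poly (q n) x = 0} {x. poly (laguerre \<alpha> (n - 1)) x = 0}" if Tn: "T n" for n
  proof -
    obtain xs ys where d: "length xs = n" "sorted_wrt (<) xs" "q n = smult (\<rho> n) (pr xs)"
      "length ys = n - 1" "sorted_wrt (<) ys" "monic_laguerre \<alpha> (n - 1) = pr ys"
      "\<forall>k<n-1. xs!k < ys!k \<and> ys!k < xs!(Suc k)"
      using decomp[OF Tn] by blast
    have n9': "n \<ge> 9" using n9[OF Tn] .
    have dist: "distinct xs" using d(2) strict_sorted_iff by blast
    have c1: "\<forall>z::complex. poly (map_poly complex_of_real (q n)) z = 0 \<longrightarrow>
                  z \<in> \<real> \<and> order z (map_poly complex_of_real (q n)) = 1"
    proof (intro allI impI)
      fix z :: complex assume "poly (map_poly complex_of_real (q n)) z = 0"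
      then have zin: "z \<in> complex_of_real ` set xs" using croots[OF d(3)] by blast
      then have "z \<in> \<real>" by auto
      moreover have "order z (map_poly complex_of_real (q n)) = 1"
      proof -
        have "complex_of_real (\<rho> n) \<noteq> 0" using rp by (metis less_irrefl of_real_eq_0_iff)
        then have "order z (map_poly complex_of_real (q n)) = order z (cpr xs)"
          unfolding cq[OF d(3)] by (rule order_smult)
        also have "\<dots> = 1" using cpr_order[OF dist] zin by simp
        finally show ?thesis .
      qed
      ultimately show "z \<in> \<real> \<and> order z (map_poly complex_of_real (q n)) = 1" by blast
    qed
    have c2: "interlaces {x. poly (q n) x = 0} {x. poly (laguerre \<alpha> (n - 1)) x = 0}"
      unfolding zq[OF d(3)] zl[OF d(6)]
      by (rule interlace_lists[OF d(2) d(5) _ d(4)]) (use d(1,7) n9' in auto)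
    show ?thesis using c1 c2 by blast
  qed
  define G where "G = (\<Sum>j\<le>K. \<bar>\<gamma> j\<bar>)"
  define c where "c = max ((23 * \<nu> * 2 ^ (K - 1) * geom_quot (23 * \<nu>) K * \<Gamma>2 - 2 * \<bar>\<alpha>\<bar>) / 8)
      (max ((\<nu> - \<alpha> + 1) / 2) (max (\<alpha> + 9) (\<nu> * (1 + G) + real K)))"
  obtain N0 :: nat where N0: "c < real N0" using reals_Archimedean2 by blast
  have part2: "\<forall>z::complex. poly (map_poly complex_of_real (q n)) z = 0 \<longrightarrow> z \<in> \<real> \<and> Re z > 0"
    if nN: "n \<ge> max N0 (2 * K)" for n
  proof -
    have cn: "c < real n" using N0 nN by (meson le_trans less_le_trans max.boundedE of_nat_le_iff order.refl)
    have Tn: "T n" unfolding T_def using cn nN unfolding c_def by auto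
    have big: "real n - real K + 1 + \<alpha> > \<nu> * (1 + (\<Sum>j\<le>K. \<bar>\<gamma> j\<bar>))"
      using cn a unfolding c_def G_def by auto
    obtain xs ys where d: "length xs = n" "sorted_wrt (<) xs" "q n = smult (\<rho> n) (pr xs)"
      "length ys = n - 1" "sorted_wrt (<) ys" "monic_laguerre \<alpha> (n - 1) = pr ys"
      "\<forall>k<n-1. xs!k < ys!k \<and> ys!k < xs!(Suc k)"
      using decomp[OF Tn] by blast
    have n9': "n \<ge> 9" using n9[OF Tn] .
    have q0: "(-1)^n * poly (q n) 0 > 0"
      by (rule q0_pos[OF a rp nu rr K g0 qd[of n] _ big]) (use nN in auto)
    have y0: "ys ! 0 > 0"
    proof (rule ccontr)
      assume "\<not> ys ! 0 > 0"
      then have "(-1)^(n-1) * poly (monic_laguerre \<alpha> (n-1)) (ys ! 0) > 0"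
        using ml_neg_pos[OF a] by simp
      moreover have "poly (monic_laguerre \<alpha> (n-1)) (ys ! 0) = 0"
        unfolding d(6) poly_pr using d(4) n9' by (simp add: prod_list_zero_iff)
      ultimately show False by simp
    qed
    have xpos: "xs ! i > 0" if i: "i < n" for i
    proof (cases i)
      case (Suc i')
      have "ys ! 0 \<le> ys ! i'"
      proof (cases i')
        case (Suc i'')
        have "i' < length ys" using i \<open>i = Suc i'\<close> d(4) by simp
        then have "ys ! 0 < ys ! i'" using sorted_wrt_nth_less[OF d(5), of 0 i'] Suc by simp
        then show ?thesis by simp
      qed simp
      moreover have "ys ! i' < xs ! i" using d(7) i \<open>i = Suc i'\<close> by auto
      ultimately show ?thesis using y0 by simp
    next
      case 0
      show ?thesis
      proof (rule ccontr)
        assume "\<not> xs ! i > 0"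
        then have x0: "xs ! 0 \<le> 0" using 0 by simp
        have r: "\<rho> n > 0" using rp by blast
        show False
        proof (cases "xs ! 0 = 0")
          case True
          have "xs ! 0 \<in> set xs" using d(1) n9' by simp
          then have "0 \<in> set xs" using True by simp
          then have "poly (pr xs) 0 = 0" unfolding poly_pr by (force simp: prod_list_zero_iff)
          then show False using q0 d(3) by simp
        next
          case False
          then have xn: "xs ! 0 < 0" using x0 by simp
          have "ys ! 0 < xs ! 1" using d(7) n9' by auto
          then have x1: "xs ! 1 > 0" using y0 by linarith
          have "sgn (poly (pr xs) 0) = (-1) ^ (length xs - 1)"
            by (rule sgn_pr_count[OF d(2)]) (use xn x1 d(1) n9' in auto)
          then have "sgn ((-1)^n * poly (q n) 0) = (-1)^n * (-1)^(n-1)"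
            unfolding d(3) using r by (simp add: sgn_mult d(1))
          also have "\<dots> = -1"
          proof -
            obtain m where mn: "n = Suc m" using n9' by (cases n) auto
            have "(-1::real)^m * (-1)^m = ((-1)*(-1))^m" by (simp only: power_mult_distrib)
            then have "(-1::real)^m * (-1)^m = 1" by simp
            then show ?thesis unfolding mn by simp
          qed
          finally show False using q0 by simp
        qed
      qed
    qed
    show ?thesis
    proof (intro allI impI)
      fix z :: complex assume "poly (map_poly complex_of_real (q n)) z = 0"
      then have "z \<in> complex_of_real ` set xs" using croots[OF d(3)] by blast
      then obtain i where "i < n" "z = complex_of_real (xs ! i)" using d(1) by (auto simp: in_set_conv_nth)
      then show "z \<in> \<real> \<and> Re z > 0" using xpos by auto
    qed
  qed
  show ?thesis
  proof
    show "\<forall>n. real n \<ge> (23 * \<nu> * 2 ^ (K - 1) * geom_quot (23 * \<nu>) K * \<Gamma>2 - 2 * \<bar>\<alpha>\<bar>) / 8 \<and>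
            real n \<ge> (\<nu> - \<alpha> + 1) / 2 \<and> real n \<ge> \<alpha> + 9 \<and> n \<ge> 2 * K \<longrightarrow>
              (\<forall>z::complex. poly (map_poly complex_of_real (q n)) z = 0 \<longrightarrow>
                  z \<in> \<real> \<and> order z (map_poly complex_of_real (q n)) = 1) \<and>
              interlaces {x. poly (q n) x = 0} {x. poly (laguerre \<alpha> (n - 1)) x = 0}"
      using part1 unfolding T_def by blast
    show "\<forall>\<^sub>F n in sequentially. \<forall>z::complex. poly (map_poly complex_of_real (q n)) z = 0 \<longrightarrow> z \<in> \<real> \<and> Re z > 0"
      unfolding eventually_sequentially using part2 by blast
  qed
qed


end
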